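(* Let $Z=\{Z_t:t\ge0\}$ be a continuous fractional Brownian motion with Hurst parameter $H\in(0,1)$. For $\alpha>0$ put $a_t:=H\,\mathrm{e}^{\alpha t/H}/\alpha$ and define $$Y^{(\alpha)}_t:=\int_0^t \mathrm{e}^{-\alpha s}\,dZ_{a_s}=\mathrm{e}^{-\alpha t}Z_{a_t}-Z_{a_0}+\alpha\int_0^t\mathrm{e}^{-\alpha s}Z_{a_s}\,ds,\quad t\ge0,$$ the integral being a pathwise Riemann–Stieltjes integral. Then for all $\alpha>0$, $$\{\alpha^H Y^{(\alpha)}_{t/\alpha}:t\ge0\}\overset{d}{=}\{Y^{(1)}_t:t\ge0\},$$ where $\overset{d}{=}$ denotes equality in law (with $Y^{(1)}$ the process obtained with $\alpha=1$). Moreover, the process $Y^{(\alpha)}$ has stationary increments.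
   Context: A fractional Brownian motion with Hurst parameter $H\in(0,1)$ is a centered Gaussian process $Z$ on $[0,\infty)$ with covariance $\mathbf{E}(Z_tZ_s)=\frac12(t^{2H}+s^{2H}-|t-s|^{2H})$; a continuous version is taken. *)

theory Defs
  imports "HOL-Probability.Probability"
begin

definition fbm_cov :: "real \<Rightarrow> real \<Rightarrow> real \<Rightarrow> real" where
  "fbm_cov H t s = (t powr (2*H) + s powr (2*H) - \<bar>t - s\<bar> powr (2*H)) / 2"

text \<open>Z is a continuous fractional Brownian motion on the probability space M:
  each Z t is a real random variable, every finite linear combination
  sum_i c_i Z(t_i) (t_i \<ge> 0) is a centered Gaussian with variance
  sum_i sum_j c_i c_j fbm_cov H t_i t_j (expressed through its characteristic
  function, which also covers the degenerate case), and all sample paths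
  are continuous on [0,\<infinity>).\<close>
definition is_fbm :: "'w measure \<Rightarrow> real \<Rightarrow> (real \<Rightarrow> 'w \<Rightarrow> real) \<Rightarrow> bool" where
  "is_fbm M H Z \<longleftrightarrow>
     prob_space M \<and>
     (\<forall>t\<ge>0. Z t \<in> borel_measurable M) \<and>
     (\<forall>(ts::real list) (cs::real list) (u::real).
        length ts = length cs \<and> (\<forall>t\<in>set ts. 0 \<le> t) \<longrightarrow>
        char (distr M borel (\<lambda>\<omega>. \<Sum>i<length ts. cs!i * Z (ts!i) \<omega>)) u =
        complex_of_real (exp (- (\<Sum>i<length ts. \<Sum>j<length ts.
              cs!i * cs!j * fbm_cov H (ts!i) (ts!j)) * u^2 / 2))) \<and>
     (\<forall>\<omega>\<in>space M. continuous_on {0..} (\<lambda>t. Z t \<omega>))"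

definition time_change :: "real \<Rightarrow> real \<Rightarrow> real \<Rightarrow> real" where
  "time_change H \<alpha> t = H * exp (\<alpha> * t / H) / \<alpha>"

definition Yproc :: "real \<Rightarrow> (real \<Rightarrow> 'w \<Rightarrow> real) \<Rightarrow> real \<Rightarrow> real \<Rightarrow> 'w \<Rightarrow> real" where
  "Yproc H Z \<alpha> t \<omega> =
     exp (- \<alpha> * t) * Z (time_change H \<alpha> t) \<omega> - Z (time_change H \<alpha> 0) \<omega>
     + \<alpha> * integral {0..t} (\<lambda>s. exp (- \<alpha> * s) * Z (time_change H \<alpha> s) \<omega>)"

definition equal_law :: "'w measure \<Rightarrow> real set \<Rightarrow> (real \<Rightarrow> 'w \<Rightarrow> real) \<Rightarrow> (real \<Rightarrow> 'w \<Rightarrow> real) \<Rightarrow> bool" where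
  "equal_law M T X Y \<longleftrightarrow>
     distr M (PiM T (\<lambda>_. borel)) (\<lambda>\<omega>. \<lambda>t\<in>T. X t \<omega>) =
     distr M (PiM T (\<lambda>_. borel)) (\<lambda>\<omega>. \<lambda>t\<in>T. Y t \<omega>)"

definition stationary_increments :: "'w measure \<Rightarrow> (real \<Rightarrow> 'w \<Rightarrow> real) \<Rightarrow> bool" where
  "stationary_increments M X \<longleftrightarrow>
     (\<forall>h\<ge>0. equal_law M {0..} (\<lambda>t \<omega>. X (t + h) \<omega> - X h \<omega>) (\<lambda>t \<omega>. X t \<omega> - X 0 \<omega>))"

end

theory Submission
  imports Defs "HOL-Analysis.Weierstrass_Theorems"
begin


inductive trig :: "('a \<Rightarrow> real) set \<Rightarrow> ('a \<Rightarrow> complex) \<Rightarrow> bool" for Lin where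
  trig_base: "l \<in> Lin \<Longrightarrow> trig Lin (\<lambda>x. c * iexp (l x))"
| trig_add: "trig Lin f \<Longrightarrow> trig Lin g \<Longrightarrow> trig Lin (\<lambda>x. f x + g x)"

lemma iexp_add: "iexp (a + b) = iexp a * iexp b"
  by (simp add: distrib_left exp_add)

lemma trig_mult:
  assumes closed: "\<And>l1 l2. l1 \<in> Lin \<Longrightarrow> l2 \<in> Lin \<Longrightarrow> (\<lambda>x. l1 x + l2 x) \<in> Lin"
  assumes f: "trig Lin f" and g: "trig Lin g"
  shows "trig Lin (\<lambda>x. f x * g x)"
  using f
proof induction
  case (trig_base l c)
  from g show ?case
  proof induction
    case (trig_base l2 c2)
    have "trig Lin (\<lambda>x. (c*c2) * iexp ((\<lambda>x. l x + l2 x) x))"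
      by (rule trig.trig_base) (use closed \<open>l \<in> Lin\<close> trig_base in auto)
    moreover have "(\<lambda>x. (c*c2) * iexp ((\<lambda>x. l x + l2 x) x)) = (\<lambda>x. c * iexp (l x) * (c2 * iexp (l2 x)))"
      by (rule ext) (simp only: iexp_add mult_ac)
    ultimately show ?case by simp
  next
    case (trig_add f g)
    have "trig Lin (\<lambda>x. c * iexp (l x) * f x + c * iexp (l x) * g x)"
      by (rule trig.trig_add[OF trig_add.IH])
    then show ?case by (simp add: distrib_left)
  qed
next
  case (trig_add f1 f2)
  have "trig Lin (\<lambda>x. f1 x * g x + f2 x * g x)"
    by (rule trig.trig_add[OF trig_add.IH])
  then show ?case by (simp add: distrib_right)
qed

lemma trig_const:
  assumes "(\<lambda>x. 0) \<in> Lin" shows "trig Lin (\<lambda>x. c)"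
  using trig_base[OF assms, of c] by simp

lemma trig_cmult:
  assumes z: "(\<lambda>x. 0) \<in> Lin" and cl: "\<And>l1 l2. l1 \<in> Lin \<Longrightarrow> l2 \<in> Lin \<Longrightarrow> (\<lambda>x. l1 x + l2 x) \<in> Lin"
    and f: "trig Lin f"
  shows "trig Lin (\<lambda>x. c * f x)"
proof -
  have 1: "trig Lin (\<lambda>x. c)" by (rule trig_const[OF z])
  show ?thesis by (rule trig_mult[OF cl 1 f])
qed

lemma trig_bounded: "trig Lin f \<Longrightarrow> \<exists>B. \<forall>x. cmod (f x) \<le> B"
proof (induction rule: trig.induct)
  case (trig_base l c)
  then show ?case by (auto simp: norm_mult norm_exp_i_times)
next
  case (trig_add f g)
  then obtain B1 B2 where "\<forall>x. cmod (f x) \<le> B1" "\<forall>x. cmod (g x) \<le> B2" by auto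
  then have "\<forall>x. cmod (f x + g x) \<le> B1 + B2"
    by (meson add_mono norm_triangle_ineq order_trans)
  then show ?case by blast
qed

lemma trig_comp:
  assumes "trig Lin1 f" "\<And>l. l \<in> Lin1 \<Longrightarrow> (\<lambda>x. l (\<phi> x)) \<in> Lin2"
  shows "trig Lin2 (\<lambda>x. f (\<phi> x))"
  using assms(1)
proof induction
  case (trig_base l c)
  then show ?case using trig.trig_base[OF assms(2)[OF trig_base], of c] by simp
next
  case (trig_add f g)
  then show ?case using trig.trig_add by fastforce
qed

lemma trig_sum:
  assumes "(\<lambda>x. 0) \<in> Lin" "finite K" "\<And>k. k \<in> K \<Longrightarrow> trig Lin (F k)"
  shows "trig Lin (\<lambda>x. \<Sum>k\<in>K. F k x)"
  using assms(2,3)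
proof (induction K rule: finite_induct)
  case empty then show ?case using trig_const[OF assms(1), of 0] by simp
next
  case (insert k K)
  have "trig Lin (\<lambda>x. F k x + (\<Sum>k\<in>K. F k x))"
    by (rule trig.trig_add) (use insert in auto)
  then show ?case using insert by simp
qed

lemma trig_prod:
  assumes "(\<lambda>x. 0) \<in> Lin" "\<And>l1 l2. l1 \<in> Lin \<Longrightarrow> l2 \<in> Lin \<Longrightarrow> (\<lambda>x. l1 x + l2 x) \<in> Lin"
    "finite K" "\<And>k. k \<in> K \<Longrightarrow> trig Lin (F k)"
  shows "trig Lin (\<lambda>x. \<Prod>k\<in>K. F k x)"
  using assms(3,4)
proof (induction K rule: finite_induct)
  case empty then show ?case using trig_const[OF assms(1), of 1] by simp
next
  case (insert k K)
  have "trig Lin (\<lambda>x. F k x * (\<Prod>k\<in>K. F k x))"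
    by (rule trig_mult[OF assms(2)]) (use insert in auto)
  then show ?case using insert by simp
qed

lemma trig_power:
  assumes z: "(\<lambda>x. 0) \<in> Lin" and cl: "\<And>l1 l2. l1 \<in> Lin \<Longrightarrow> l2 \<in> Lin \<Longrightarrow> (\<lambda>x. l1 x + l2 x) \<in> Lin"
    and f: "trig Lin f"
  shows "trig Lin (\<lambda>x. f x ^ n)"
proof -
  have "trig Lin (\<lambda>x. \<Prod>k\<in>{..<n}. f x)"
    by (rule trig_prod[OF z cl]) (simp_all add: f)
  then show ?thesis by simp
qed

definition Lin1 :: "(real \<Rightarrow> real) set" where "Lin1 = range (\<lambda>v y. v * y)"
definition LinJ :: "real set \<Rightarrow> ((real \<Rightarrow> real) \<Rightarrow> real) set" where
  "LinJ J = range (\<lambda>u x. \<Sum>j\<in>J. u j * x j)"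

lemma Lin1_zero: "(\<lambda>x. 0) \<in> Lin1" unfolding Lin1_def by (auto intro!: image_eqI[of _ _ 0])
lemma Lin1_add: "l1 \<in> Lin1 \<Longrightarrow> l2 \<in> Lin1 \<Longrightarrow> (\<lambda>x. l1 x + l2 x) \<in> Lin1"
  unfolding Lin1_def by (auto simp: distrib_right[symmetric])
lemma LinJ_zero: "(\<lambda>x. 0) \<in> LinJ J" unfolding LinJ_def by (auto intro!: image_eqI[of _ _ "\<lambda>_. 0"])
lemma LinJ_add: "l1 \<in> LinJ J \<Longrightarrow> l2 \<in> LinJ J \<Longrightarrow> (\<lambda>x. l1 x + l2 x) \<in> LinJ J"
  unfolding LinJ_def
  by (auto simp: sum.distrib[symmetric] distrib_right intro!: image_eqI[of _ _ "\<lambda>j. _ j + _ j"])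

lemma trig1_coord:
  assumes "trig Lin1 f" "j \<in> J" "finite J"
  shows "trig (LinJ J) (\<lambda>x. f (x j))"
proof (rule trig_comp[OF assms(1)])
  fix l assume "l \<in> Lin1"
  then obtain v where l: "l = (\<lambda>y. v * y)" unfolding Lin1_def by auto
  have eq: "(\<lambda>u x. \<Sum>i\<in>J. u i * x i) (\<lambda>i. if i = j then v else 0) = (\<lambda>x. l (x j))"
  proof (rule ext)
    fix x :: "real \<Rightarrow> real"
    have "(\<Sum>i\<in>J. (if i = j then v else 0) * x i) = (\<Sum>i\<in>J. if i = j then v * x j else 0)"
      by (rule sum.cong) auto
    also have "\<dots> = v * x j" using assms(2,3) by simp
    finally have "(\<Sum>i\<in>J. (if i = j then v else 0) * x i) = v * x j" .
    then show "(\<lambda>u x. \<Sum>i\<in>J. u i * x i) (\<lambda>i. if i = j then v else 0) x = l (x j)"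
      unfolding l by simp
  qed
  have "(\<lambda>u x. \<Sum>i\<in>J. u i * x i) (\<lambda>i. if i = j then v else 0) \<in> LinJ J"
    unfolding LinJ_def by (rule rangeI[of "\<lambda>u x. \<Sum>i\<in>J. u i * x i"])
  then show "(\<lambda>x. l (x j)) \<in> LinJ J" by (simp only: eq)
qed



lemma trig_measurable:
  assumes "trig (LinJ J) f" "finite J" "\<And>j. j \<in> J \<Longrightarrow> X j \<in> borel_measurable M"
  shows "(\<lambda>\<omega>. f (\<lambda>j. X j \<omega>)) \<in> borel_measurable M"
  using assms(1)
proof induction
  case (trig_base l c)
  then obtain u where l: "l = (\<lambda>x. \<Sum>j\<in>J. u j * x j)" unfolding LinJ_def by auto
  have [measurable]: "(\<lambda>\<omega>. \<Sum>j\<in>J. u j * X j \<omega>) \<in> borel_measurable M"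
    using assms(3) by (intro borel_measurable_sum borel_measurable_times borel_measurable_const) auto
  show ?case unfolding l by measurable
next
  case (trig_add f g) then show ?case by (intro borel_measurable_add)
qed

lemma trig_integrable:
  assumes "prob_space M" "trig (LinJ J) f" "finite J" "\<And>j. j \<in> J \<Longrightarrow> X j \<in> borel_measurable M"
  shows "integrable M (\<lambda>\<omega>. f (\<lambda>j. X j \<omega>))"
proof -
  from trig_bounded[OF assms(2)] obtain B where B: "\<And>x. cmod (f x) \<le> B" by auto
  show ?thesis
    by (rule finite_measure.integrable_const_bound[OF prob_space.finite_measure[OF assms(1)], where B=B])
       (auto simp: B intro: trig_measurable[OF assms(2-4)])
qed

lemma trig_integral_eq:
  assumes M: "prob_space M" and J: "finite J"
    and m1: "\<And>j. j \<in> J \<Longrightarrow> X1 j \<in> borel_measurable M"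
    and m2: "\<And>j. j \<in> J \<Longrightarrow> X2 j \<in> borel_measurable M"
    and hyp: "\<And>u. (CLINT \<omega>|M. iexp (\<Sum>j\<in>J. u j * X1 j \<omega>)) = (CLINT \<omega>|M. iexp (\<Sum>j\<in>J. u j * X2 j \<omega>))"
    and f: "trig (LinJ J) f"
  shows "(CLINT \<omega>|M. f (\<lambda>j. X1 j \<omega>)) = (CLINT \<omega>|M. f (\<lambda>j. X2 j \<omega>))"
  using f
proof induction
  case (trig_base l c)
  then obtain u where l: "l = (\<lambda>x. \<Sum>j\<in>J. u j * x j)" unfolding LinJ_def by auto
  show ?case unfolding l using hyp[of u] by (simp add: integral_mult_right_zero)
next
  case (trig_add f g)
  have "(CLINT \<omega>|M. f (\<lambda>j. X1 j \<omega>) + g (\<lambda>j. X1 j \<omega>)) = (CLINT \<omega>|M. f (\<lambda>j. X1 j \<omega>)) + (CLINT \<omega>|M. g (\<lambda>j. X1 j \<omega>))"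
    by (intro Bochner_Integration.integral_add trig_integrable[OF M _ J m1] trig_add.hyps)
  moreover have "(CLINT \<omega>|M. f (\<lambda>j. X2 j \<omega>) + g (\<lambda>j. X2 j \<omega>)) = (CLINT \<omega>|M. f (\<lambda>j. X2 j \<omega>)) + (CLINT \<omega>|M. g (\<lambda>j. X2 j \<omega>))"
    by (intro Bochner_Integration.integral_add trig_integrable[OF M _ J m2] trig_add.hyps)
  ultimately show ?case using trig_add.IH by simp
qed

lemma cos_iexp: "complex_of_real (cos t) = (iexp t + iexp (-t)) / 2"
  by (simp add: cos_of_real[symmetric] cos_exp_eq)

lemma trig1_base: "trig Lin1 (\<lambda>y. c * iexp (v * y))"
  by (rule trig_base) (auto simp: Lin1_def)

lemma trig1_cos:
  "trig Lin1 (\<lambda>y. complex_of_real (cos (a * y + b)))"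
proof -
  have eq: "complex_of_real (cos (a * y + b)) =
     (iexp b / 2) * iexp (a * y) + (iexp (-b) / 2) * iexp ((-a) * y)" for y
  proof -
    have "complex_of_real (cos (a * y + b)) = (iexp (a * y + b) + iexp (- (a * y + b))) / 2"
      by (rule cos_iexp)
    also have "iexp (a * y + b) = iexp b * iexp (a * y)" by (simp only: iexp_add mult.commute add.commute)
    also have "iexp (- (a * y + b)) = iexp (-b) * iexp ((-a) * y)"
      by (simp only: iexp_add[symmetric]) (simp add: algebra_simps)
    finally show ?thesis by (simp add: field_simps)
  qed
  have "trig Lin1 (\<lambda>y. (iexp b / 2) * iexp (a * y) + (iexp (-b) / 2) * iexp ((-a) * y))"
    by (intro trig_add trig1_base)
  then show ?thesis by (simp only: eq)
qed

lemmas t1c = trig_const[OF Lin1_zero]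
lemmas t1m = trig_mult[OF Lin1_add]
lemmas t1s = trig_sum[OF Lin1_zero]
lemmas t1p = trig_power[OF Lin1_zero Lin1_add]

lemma cos01: "(1 + cos t)/2 \<in> {0..1::real}"
proof -
  have a: "-1 \<le> cos t" "cos t \<le> 1" by simp_all
  have b: "0 \<le> 1 + cos t" using a by linarith
  have c: "1 + cos t \<le> 2" using a by linarith
  show ?thesis using b c by (simp add: field_simps)
qed

lemma approx1:
  fixes h :: "real \<Rightarrow> real"
  assumes hc: "continuous_on UNIV h" and hb: "\<And>y. \<bar>h y\<bar> \<le> 1" and L: "0 < L"
    and e: "0 < e" "e \<le> 1"
  shows "\<exists>q. trig Lin1 (\<lambda>y. complex_of_real (q y)) \<and> (\<forall>y. \<bar>q y\<bar> \<le> 2) \<and>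
             (\<forall>y. \<bar>y\<bar> \<le> L \<longrightarrow> \<bar>q y - h y\<bar> < e)"
proof -
  define \<phi> where "\<phi> x = h ((2*L/pi) * arccos (2*x-1) - L)" for x
  have c1: "continuous_on {0..1} (\<lambda>x. (2*L/pi) * arccos (2*x-1) - L)"
    by (intro continuous_intros continuous_on_arccos) auto
  have cphi: "continuous_on {0..1} \<phi>"
    unfolding \<phi>_def by (rule continuous_on_compose2[OF hc c1]) auto
  obtain N where N: "\<And>n x. N \<le> n \<Longrightarrow> x \<in> {0..1} \<Longrightarrow>
      \<bar>\<phi> x - (\<Sum>k\<le>n. \<phi>(k/n) * Bernstein n k x)\<bar> < e"
    using Bernstein_Weierstrass[OF cphi e(1)] by blast
  define xx where "xx y = (1 + cos (pi/(2*L) * y + pi/2))/2" for y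
  define q where "q y = (\<Sum>k\<le>N. \<phi>(k/N) * Bernstein N k (xx y))" for y
  have xx01: "xx y \<in> {0..1}" for y
    unfolding xx_def by (rule cos01)
  have qN: "\<bar>\<phi> (xx y) - q y\<bar> < e" for y
    unfolding q_def using N[OF order_refl xx01] .
  have phib: "\<bar>\<phi> x\<bar> \<le> 1" for x unfolding \<phi>_def by (rule hb)
  have qb: "\<forall>y. \<bar>q y\<bar> \<le> 2"
  proof
    fix y show "\<bar>q y\<bar> \<le> 2" using qN[of y] phib[of "xx y"] e(2) by linarith
  qed
  have qa: "\<forall>y. \<bar>y\<bar> \<le> L \<longrightarrow> \<bar>q y - h y\<bar> < e"
  proof (intro allI impI)
    fix y assume y: "\<bar>y\<bar> \<le> L"
    define \<theta> where "\<theta> = pi/(2*L) * y + pi/2"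
    have th: "\<theta> = pi * (y + L) / (2 * L)" unfolding \<theta>_def using L by (simp add: field_simps)
    have "0 \<le> \<theta>" unfolding th using y L by (intro divide_nonneg_pos mult_nonneg_nonneg) auto
    moreover have "\<theta> \<le> pi" unfolding th using y L by (simp add: field_simps)
    ultimately have ac: "arccos (cos \<theta>) = \<theta>" by (rule arccos_cos)
    have "2 * xx y - 1 = cos \<theta>" unfolding xx_def \<theta>_def by (simp add: field_simps)
    then have "(2*L/pi) * arccos (2 * xx y - 1) - L = y"
      using ac L unfolding th by (simp add: field_simps)
    then have "\<phi> (xx y) = h y" unfolding \<phi>_def by simp
    then show "\<bar>q y - h y\<bar> < e" using qN[of y] by linarith
  qed
  have txx: "trig Lin1 (\<lambda>y. complex_of_real (xx y))"
  proof -
    have "trig Lin1 (\<lambda>y. complex_of_real (1/2) + complex_of_real (1/2) * complex_of_real (cos (pi/(2*L) * y + pi/2)))"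
      by (intro trig_add t1c trig_cmult[OF Lin1_zero Lin1_add] trig1_cos)
    moreover have "(\<lambda>y. complex_of_real (1/2) + complex_of_real (1/2) * complex_of_real (cos (pi/(2*L) * y + pi/2)))
       = (\<lambda>y. complex_of_real (xx y))"
      unfolding xx_def by (rule ext) (simp add: field_simps)
    ultimately show ?thesis by simp
  qed
  have t1mx: "trig Lin1 (\<lambda>y. 1 - complex_of_real (xx y))"
  proof -
    have "trig Lin1 (\<lambda>y. 1 + (-1) * complex_of_real (xx y))"
      by (intro trig_add t1c trig_cmult[OF Lin1_zero Lin1_add] txx)
    then show ?thesis by simp
  qed
  have tq: "trig Lin1 (\<lambda>y. complex_of_real (q y))"
  proof -
    have "trig Lin1 (\<lambda>y. \<Sum>k\<le>N. complex_of_real (\<phi>(k/N)) * (of_nat (N choose k) *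
              complex_of_real (xx y) ^ k * (1 - complex_of_real (xx y)) ^ (N - k)))"
      by (intro t1s finite_atMost trig_cmult[OF Lin1_zero Lin1_add] t1m t1p txx t1mx)
    moreover have "(\<lambda>y. \<Sum>k\<le>N. complex_of_real (\<phi>(k/N)) * (of_nat (N choose k) *
              complex_of_real (xx y) ^ k * (1 - complex_of_real (xx y)) ^ (N - k)))
        = (\<lambda>y. complex_of_real (q y))"
      unfolding q_def Bernstein_def by (rule ext) simp
    ultimately show ?thesis by simp
  qed
  show ?thesis using tq qb qa by blast
qed



definition ramp :: "real \<Rightarrow> real \<Rightarrow> nat \<Rightarrow> real \<Rightarrow> real" where
  "ramp a b n y = max 0 (min 1 (real n * min (y - a) (b - y)))"

lemma ramp_cont: "continuous_on UNIV (ramp a b n)"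
  unfolding ramp_def by (intro continuous_intros)

lemma ramp_bound: "\<bar>ramp a b n y\<bar> \<le> 1"
  unfolding ramp_def by auto

lemma ramp_ev: "eventually (\<lambda>n. ramp a b n y = indicator {a<..<b} y) sequentially"
proof (cases "a < y \<and> y < b")
  case True
  define m where "m = min (y - a) (b - y)"
  have m: "m > 0" using True m_def by auto
  obtain N :: nat where N: "1/m \<le> real N" using real_arch_simple by blast
  have "ramp a b n y = 1" if "N \<le> n" for n
  proof -
    have "real N \<le> real n" using that by simp
    then have "1/m \<le> real n" using N by linarith
    then have "1 \<le> real n * m" using m by (simp add: pos_divide_le_eq)
    then show ?thesis unfolding ramp_def m_def[symmetric] by auto
  qed
  then show ?thesis using True by (auto simp: eventually_sequentially indicator_def)
next
  case False
  then have "min (y - a) (b - y) \<le> 0" by auto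
  then have "real n * min (y-a) (b-y) \<le> 0" for n by (simp add: mult_nonneg_nonpos)
  then have "ramp a b n y = 0" for n unfolding ramp_def by (metis max.absorb1 min.coboundedI2 min_def)
  then show ?thesis using False by (auto simp: indicator_def)
qed

lemma tend_aux:
  fixes f :: "nat \<Rightarrow> real"
  assumes "eventually (\<lambda>n. \<bar>f n - l\<bar> \<le> 1/(real n+1)) sequentially"
  shows "f \<longlonglongrightarrow> l"
proof -
  have g: "(\<lambda>n. 1/(real n+1)) \<longlonglongrightarrow> 0"
    using LIMSEQ_inverse_real_of_nat by (simp add: divide_inverse add.commute)
  have "(\<lambda>n. f n - l) \<longlonglongrightarrow> 0"
    by (rule Lim_null_comparison[OF _ g]) (use assms in simp)
  from tendsto_add[OF this tendsto_const[of l]] show ?thesis by simp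
qed

lemma prod_ind:
  assumes "finite J"
  shows "(\<Prod>j\<in>J. indicator (A j) (x j) :: real) = (if \<forall>j\<in>J. x j \<in> A j then 1 else 0)"
  using assms by (induction J rule: finite_induct) (auto simp: indicator_def)

lemma box_eq:
  fixes a b :: "real \<Rightarrow> real"
  assumes M: "prob_space M" and J: "finite J"
    and m1: "\<And>j. j \<in> J \<Longrightarrow> X1 j \<in> borel_measurable M"
    and m2: "\<And>j. j \<in> J \<Longrightarrow> X2 j \<in> borel_measurable M"
    and hyp: "\<And>u. (CLINT \<omega>|M. iexp (\<Sum>j\<in>J. u j * X1 j \<omega>)) = (CLINT \<omega>|M. iexp (\<Sum>j\<in>J. u j * X2 j \<omega>))"
  shows "emeasure M {\<omega>\<in>space M. \<forall>j\<in>J. X1 j \<omega> \<in> {a j<..<b j}} =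
         emeasure M {\<omega>\<in>space M. \<forall>j\<in>J. X2 j \<omega> \<in> {a j<..<b j}}"
proof -
  interpret prob_space M by fact
  have ex: "\<exists>q. trig Lin1 (\<lambda>y. complex_of_real (q y)) \<and> (\<forall>y. \<bar>q y\<bar> \<le> 2) \<and>
             (\<forall>y. \<bar>y\<bar> \<le> real n + 1 \<longrightarrow> \<bar>q y - ramp (a j) (b j) n y\<bar> < 1/(real n+1))" for n j
    by (rule approx1[OF ramp_cont ramp_bound]) auto
  obtain Q where Q: "\<And>n j. trig Lin1 (\<lambda>y. complex_of_real (Q n j y)) \<and> (\<forall>y. \<bar>Q n j y\<bar> \<le> 2) \<and>
             (\<forall>y. \<bar>y\<bar> \<le> real n + 1 \<longrightarrow> \<bar>Q n j y - ramp (a j) (b j) n y\<bar> < 1/(real n+1))"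
    using ex by metis
  define s where "s n x = (\<Prod>j\<in>J. Q n j (x j))" for n and x :: "real \<Rightarrow> real"
  define g where "g x = (\<Prod>j\<in>J. indicator {a j<..<b j} (x j) :: real)" for x :: "real \<Rightarrow> real"
  have trig_s: "trig (LinJ J) (\<lambda>x. complex_of_real (s n x))" for n
  proof -
    have "trig (LinJ J) (\<lambda>x. \<Prod>j\<in>J. complex_of_real (Q n j (x j)))"
      by (rule trig_prod[OF LinJ_zero LinJ_add J]) (use Q J in \<open>auto intro: trig1_coord\<close>)
    then show ?thesis unfolding s_def by simp
  qed
  have sb: "\<bar>s n x\<bar> \<le> 2 ^ card J" for n x
  proof -
    have "(\<Prod>j\<in>J. \<bar>Q n j (x j)\<bar>) \<le> (\<Prod>j\<in>J. 2)"
      by (rule prod_mono) (use Q in auto)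
    then show ?thesis unfolding s_def by (simp add: abs_prod)
  qed
  have conv1: "(\<lambda>n. Q n j y) \<longlonglongrightarrow> indicator {a j<..<b j} y" for j y
  proof (rule tend_aux)
    obtain N :: nat where N: "\<bar>y\<bar> \<le> real N" using real_arch_simple by blast
    have "eventually (\<lambda>n. N \<le> n) sequentially" by (rule eventually_ge_at_top)
    then show "eventually (\<lambda>n. \<bar>Q n j y - indicator {a j<..<b j} y\<bar> \<le> 1/(real n+1)) sequentially"
      using ramp_ev[of "a j" "b j" y]
    proof eventually_elim
      case (elim n)
      have "\<bar>y\<bar> \<le> real n + 1" using N elim(1) by linarith
      then have "\<bar>Q n j y - ramp (a j) (b j) n y\<bar> < 1/(real n+1)" using Q by blast
      then show ?case using elim(2) by simp
    qed
  qed
  have conv: "(\<lambda>n. s n x) \<longlonglongrightarrow> g x" for x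
    unfolding s_def g_def by (intro tendsto_prod conv1)
  have ms: "(\<lambda>\<omega>. s n (\<lambda>j. X j \<omega>)) \<in> borel_measurable M"
    if mX: "\<And>j. j \<in> J \<Longrightarrow> X j \<in> borel_measurable M" for X n
  proof -
    have [measurable]: "(\<lambda>\<omega>. complex_of_real (s n (\<lambda>j. X j \<omega>))) \<in> borel_measurable M"
      by (rule trig_measurable[OF trig_s J mX])
    have "(\<lambda>\<omega>. Re (complex_of_real (s n (\<lambda>j. X j \<omega>)))) \<in> borel_measurable M" by measurable
    then show ?thesis by simp
  qed
  have mg: "(\<lambda>\<omega>. g (\<lambda>j. X j \<omega>)) \<in> borel_measurable M"
    if mX: "\<And>j. j \<in> J \<Longrightarrow> X j \<in> borel_measurable M" for X
    unfolding g_def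
    by (rule borel_measurable_prod) (rule measurable_compose[OF mX borel_measurable_indicator]; simp)
  have lim: "(\<lambda>n. LINT \<omega>|M. s n (\<lambda>j. X j \<omega>)) \<longlonglongrightarrow> (LINT \<omega>|M. g (\<lambda>j. X j \<omega>))"
    if mX: "\<And>j. j \<in> J \<Longrightarrow> X j \<in> borel_measurable M" for X
  proof (rule integral_dominated_convergence[where w="\<lambda>_. 2 ^ card J"])
    show "(\<lambda>\<omega>. g (\<lambda>j. X j \<omega>)) \<in> borel_measurable M" by (rule mg[OF mX])
    show "(\<lambda>\<omega>. s n (\<lambda>j. X j \<omega>)) \<in> borel_measurable M" for n by (rule ms[OF mX])
    show "integrable M (\<lambda>_. 2 ^ card J :: real)" by simp
    show "AE \<omega> in M. (\<lambda>n. s n (\<lambda>j. X j \<omega>)) \<longlonglongrightarrow> g (\<lambda>j. X j \<omega>)" using conv by simp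
    show "AE \<omega> in M. norm (s n (\<lambda>j. X j \<omega>)) \<le> 2 ^ card J" for n using sb by simp
  qed
  have ieq: "(LINT \<omega>|M. s n (\<lambda>j. X1 j \<omega>)) = (LINT \<omega>|M. s n (\<lambda>j. X2 j \<omega>))" for n
  proof -
    have "(CLINT \<omega>|M. complex_of_real (s n (\<lambda>j. X1 j \<omega>))) = (CLINT \<omega>|M. complex_of_real (s n (\<lambda>j. X2 j \<omega>)))"
      by (rule trig_integral_eq[OF M J m1 m2 hyp trig_s])
    then show ?thesis by (simp add: integral_complex_of_real)
  qed
  have geq: "(LINT \<omega>|M. g (\<lambda>j. X1 j \<omega>)) = (LINT \<omega>|M. g (\<lambda>j. X2 j \<omega>))"
    using LIMSEQ_unique[OF lim[OF m1]] lim[OF m2] ieq by simp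
  have gmeas: "(LINT \<omega>|M. g (\<lambda>j. X j \<omega>)) = measure M {\<omega>\<in>space M. \<forall>j\<in>J. X j \<omega> \<in> {a j<..<b j}}"
    for X
  proof -
    have "(LINT \<omega>|M. g (\<lambda>j. X j \<omega>)) = (LINT \<omega>|M. indicator {\<omega>\<in>space M. \<forall>j\<in>J. X j \<omega> \<in> {a j<..<b j}} \<omega>)"
    proof (rule Bochner_Integration.integral_cong)
      fix \<omega> assume "\<omega> \<in> space M"
      then show "g (\<lambda>j. X j \<omega>) = indicator {\<omega>\<in>space M. \<forall>j\<in>J. X j \<omega> \<in> {a j<..<b j}} \<omega>"
        unfolding g_def prod_ind[OF J] by (simp add: indicator_def)
    qed simp
    also have "\<dots> = measure M {\<omega>\<in>space M. \<forall>j\<in>J. X j \<omega> \<in> {a j<..<b j}}"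
      by (simp add: Int_absorb2)
    finally show ?thesis .
  qed
  have "measure M {\<omega>\<in>space M. \<forall>j\<in>J. X1 j \<omega> \<in> {a j<..<b j}} = measure M {\<omega>\<in>space M. \<forall>j\<in>J. X2 j \<omega> \<in> {a j<..<b j}}"
    using geq gmeas by simp
  then show ?thesis by (simp add: emeasure_eq_measure)
qed



lemma borel_eq_Ioo: "borel = sigma UNIV (range (\<lambda>(a,b). {a<..<b::real}))"
proof -
  have "(\<lambda>(a,b). box a b) = (\<lambda>(a, b). {a<..<b::real})" by (auto simp: box_real)
  then show ?thesis using borel_eq_box[where 'a=real] by simp
qed

lemma rangeIoo: "S \<in> range (\<lambda>(a,b). {a<..<b::real}) \<Longrightarrow> \<exists>a b. S = {a<..<b}" by auto
lemma IooI: "{a<..<b::real} \<in> range (\<lambda>(a,b). {a<..<b})" by (rule image_eqI[where x="(a,b)"]) auto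

lemma cramer_wold:
  fixes J :: "real set"
  assumes M: "prob_space M" and J: "finite J"
    and m1: "\<And>j. j \<in> J \<Longrightarrow> X1 j \<in> borel_measurable M"
    and m2: "\<And>j. j \<in> J \<Longrightarrow> X2 j \<in> borel_measurable M"
    and hyp: "\<And>u. (CLINT \<omega>|M. iexp (\<Sum>j\<in>J. u j * X1 j \<omega>)) = (CLINT \<omega>|M. iexp (\<Sum>j\<in>J. u j * X2 j \<omega>))"
  shows "distr M (PiM J (\<lambda>_. borel)) (\<lambda>\<omega>. \<lambda>j\<in>J. X1 j \<omega>) = distr M (PiM J (\<lambda>_. borel)) (\<lambda>\<omega>. \<lambda>j\<in>J. X2 j \<omega>)"
proof -
  interpret prob_space M by fact
  define E where "E = range (\<lambda>(a,b). {a<..<b::real})"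
  define \<Omega> where "\<Omega> = PiE J (\<lambda>_. UNIV :: real set)"
  define P where "P = {{f \<in> \<Omega>. \<forall>i\<in>J. f i \<in> A i} | A. A \<in> Pi J (\<lambda>_. E)}"
  have Pform: "P = {{f \<in> \<Omega>. \<forall>i\<in>j. f i \<in> A i} | A j. j \<in> {J} \<and> A \<in> Pi j (\<lambda>_. E)}"
    unfolding P_def by blast
  have PiMeq: "PiM J (\<lambda>_. borel) = PiM J (\<lambda>_. sigma UNIV E)"
    using borel_eq_Ioo unfolding E_def by simp
  have PPow: "P \<subseteq> Pow \<Omega>" unfolding P_def by auto
  have sets_eq: "sets (PiM J (\<lambda>_. borel)) = sigma_sets \<Omega> P"
  proof -
    have "sets (PiM J (\<lambda>_. sigma UNIV E)) = sets (sigma \<Omega> P)"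
      unfolding Pform \<Omega>_def
    proof (rule sets_PiM_sigma)
      fix i assume "i \<in> J"
      show "\<exists>S\<subseteq>E. countable S \<and> UNIV = \<Union> S"
      proof (intro exI conjI)
        show "range (\<lambda>n::nat. {- real n<..<real n}) \<subseteq> E" unfolding E_def by auto
        show "countable (range (\<lambda>n::nat. {- real n<..<real n}))" by simp
        show "UNIV = \<Union> (range (\<lambda>n::nat. {- real n<..<real n}))"
        proof (safe)
          fix x :: real
          obtain n :: nat where "\<bar>x\<bar> + 1 \<le> real n" using real_arch_simple by blast
          then show "x \<in> \<Union> (range (\<lambda>n::nat. {- real n<..<real n}))" by (auto intro!: exI[of _ n])
        qed auto
      qed
    qed (auto simp: E_def J)
    then show ?thesis using PPow by (simp add: PiMeq)
  qed
  let ?V1 = "\<lambda>\<omega>. \<lambda>j\<in>J. X1 j \<omega>" and ?V2 = "\<lambda>\<omega>. \<lambda>j\<in>J. X2 j \<omega>"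
  have mV1: "?V1 \<in> M \<rightarrow>\<^sub>M PiM J (\<lambda>_. borel)" by (rule measurable_restrict) (use m1 in auto)
  have mV2: "?V2 \<in> M \<rightarrow>\<^sub>M PiM J (\<lambda>_. borel)" by (rule measurable_restrict) (use m2 in auto)
  show ?thesis
  proof (rule measure_eqI_generator_eq[where \<Omega>=\<Omega> and E=P and
        A="\<lambda>n::nat. {f \<in> \<Omega>. \<forall>i\<in>J. f i \<in> {- real n<..<real n}}"])
    show "Int_stable P"
    proof (unfold Int_stable_def, intro ballI)
      fix X Y assume "X \<in> P" "Y \<in> P"
      then obtain A B where A: "A \<in> Pi J (\<lambda>_. E)" "X = {f \<in> \<Omega>. \<forall>i\<in>J. f i \<in> A i}"
        and B: "B \<in> Pi J (\<lambda>_. E)" "Y = {f \<in> \<Omega>. \<forall>i\<in>J. f i \<in> B i}"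
        unfolding P_def by blast
      have "(\<lambda>i. A i \<inter> B i) \<in> Pi J (\<lambda>_. E)"
      proof
        fix i assume "i \<in> J"
        then have "A i \<in> E" "B i \<in> E" using A B by auto
        then obtain a b c d where "A i = {a<..<b}" "B i = {c<..<d}"
          unfolding E_def by (metis rangeIoo)
        then have "A i \<inter> B i = {max a c<..<min b d}" by auto
        then show "A i \<inter> B i \<in> E" unfolding E_def by (simp only: IooI)
      qed
      moreover have "X \<inter> Y = {f \<in> \<Omega>. \<forall>i\<in>J. f i \<in> A i \<inter> B i}" using A B by auto
      ultimately have "\<exists>C. X \<inter> Y = {f \<in> \<Omega>. \<forall>i\<in>J. f i \<in> C i} \<and> C \<in> Pi J (\<lambda>_. E)"
        by (intro exI[where x="\<lambda>i. A i \<inter> B i"] conjI)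
      then show "X \<inter> Y \<in> P" unfolding P_def mem_Collect_eq by assumption
    qed
    show "P \<subseteq> Pow \<Omega>" by (rule PPow)
    show "sets (distr M (PiM J (\<lambda>_. borel)) ?V1) = sigma_sets \<Omega> P" using sets_eq by simp
    show "sets (distr M (PiM J (\<lambda>_. borel)) ?V2) = sigma_sets \<Omega> P" using sets_eq by simp
    show "range (\<lambda>n::nat. {f \<in> \<Omega>. \<forall>i\<in>J. f i \<in> {- real n<..<real n}}) \<subseteq> P"
    proof
      fix S assume "S \<in> range (\<lambda>n::nat. {f \<in> \<Omega>. \<forall>i\<in>J. f i \<in> {- real n<..<real n}})"
      then obtain n :: nat where S: "S = {f \<in> \<Omega>. \<forall>i\<in>J. f i \<in> (\<lambda>_. {- real n<..<real n}) i}" by auto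
      have "(\<lambda>_. {- real n<..<real n}) \<in> Pi J (\<lambda>_. E)" unfolding E_def by auto
      then have "\<exists>C. S = {f \<in> \<Omega>. \<forall>i\<in>J. f i \<in> C i} \<and> C \<in> Pi J (\<lambda>_. E)"
        unfolding S by (intro exI[where x="\<lambda>_. {- real n<..<real n}"] conjI) simp_all
      then show "S \<in> P" unfolding P_def mem_Collect_eq by assumption
    qed
    show "(\<Union>n::nat. {f \<in> \<Omega>. \<forall>i\<in>J. f i \<in> {- real n<..<real n}}) = \<Omega>"
    proof safe
      fix f assume "f \<in> \<Omega>"
      obtain n :: nat where n: "Max (insert 0 ((\<lambda>i. \<bar>f i\<bar>) ` J)) + 1 \<le> real n"
        using real_arch_simple by blast
      have "f i \<in> {- real n<..<real n}" if "i \<in> J" for i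
      proof -
        have "\<bar>f i\<bar> \<le> Max (insert 0 ((\<lambda>i. \<bar>f i\<bar>) ` J))" using that J by (intro Max_ge) auto
        then have "\<bar>f i\<bar> < real n" using n by linarith
        then show ?thesis unfolding abs_less_iff greaterThanLessThan_iff by linarith
      qed
      then show "f \<in> (\<Union>n::nat. {f \<in> \<Omega>. \<forall>i\<in>J. f i \<in> {- real n<..<real n}})"
        using \<open>f \<in> \<Omega>\<close> by blast
    qed
    show "emeasure (distr M (PiM J (\<lambda>_. borel)) ?V1) (A n) \<noteq> \<infinity>" for A n
      using finite_measure.emeasure_finite[OF prob_space.finite_measure[OF prob_space_distr[OF mV1]]] by simp
    fix X assume "X \<in> P"
    then obtain A where A: "A \<in> Pi J (\<lambda>_. E)" and X: "X = {f \<in> \<Omega>. \<forall>i\<in>J. f i \<in> A i}"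
      unfolding P_def by blast
    have "\<forall>i\<in>J. \<exists>ab. A i = {fst ab<..<snd ab}" using A unfolding E_def by fastforce
    then obtain ab where ab: "\<And>i. i \<in> J \<Longrightarrow> A i = {fst (ab i)<..<snd (ab i)}" by metis
    have XS: "X \<in> sets (PiM J (\<lambda>_. borel))" using \<open>X \<in> P\<close> sets_eq by auto
    have pre: "V -` X \<inter> space M = {\<omega>\<in>space M. \<forall>j\<in>J. V \<omega> j \<in> {fst (ab j)<..<snd (ab j)}}"
      if "\<And>\<omega>. V \<omega> \<in> \<Omega>" for V
      using that ab unfolding X by auto
    have "emeasure (distr M (PiM J (\<lambda>_. borel)) ?V1) X = emeasure M {\<omega>\<in>space M. \<forall>j\<in>J. X1 j \<omega> \<in> {fst (ab j)<..<snd (ab j)}}"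
      by (subst emeasure_distr[OF mV1 XS], subst pre) (auto simp: \<Omega>_def)
    also have "\<dots> = emeasure M {\<omega>\<in>space M. \<forall>j\<in>J. X2 j \<omega> \<in> {fst (ab j)<..<snd (ab j)}}"
      by (rule box_eq[OF M J m1 m2 hyp])
    also have "\<dots> = emeasure (distr M (PiM J (\<lambda>_. borel)) ?V2) X"
      by (subst emeasure_distr[OF mV2 XS], subst pre) (auto simp: \<Omega>_def)
    finally show "emeasure (distr M (PiM J (\<lambda>_. borel)) ?V1) X = emeasure (distr M (PiM J (\<lambda>_. borel)) ?V2) X" .
  qed
qed



definition lin :: "(real \<Rightarrow> real) \<Rightarrow> real list \<Rightarrow> real list \<Rightarrow> real" where
  "lin g ts cs = sum_list (map (\<lambda>(t, c). c * g t) (zip ts cs))"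

lemma lin_nth: "length ts = length cs \<Longrightarrow> lin g ts cs = (\<Sum>i<length ts. cs ! i * g (ts ! i))"
  unfolding lin_def by (simp add: sum_list_sum_nth nth_zip atLeast0LessThan)

lemma lin_append: "length ts = length cs \<Longrightarrow> lin g (ts @ ts') (cs @ cs') = lin g ts cs + lin g ts' cs'"
  unfolding lin_def by simp

lemma lin_scale: "lin g ts (map ((*) a) cs) = a * lin g ts cs"
proof (induction ts arbitrary: cs)
  case Nil then show ?case by (simp add: lin_def)
next
  case (Cons t ts)
  then show ?case by (cases cs) (simp_all add: lin_def distrib_left)
qed

lemma lin_concat:
  "(\<And>x. x \<in> set xs \<Longrightarrow> length (F x) = length (G x)) \<Longrightarrow>
   lin g (concat (map F xs)) (concat (map G xs)) = (\<Sum>x\<leftarrow>xs. lin g (F x) (G x))"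
proof (induction xs)
  case Nil then show ?case by (simp add: lin_def)
next
  case (Cons x xs)
  then show ?case by (simp add: lin_append)
qed

lemma lin_combine:
  assumes J: "finite J" and len: "\<And>t. length (TS t) = length (CS t)"
  shows "lin g (concat (map TS (sorted_list_of_set J))) (concat (map (\<lambda>t. map ((*) (u t)) (CS t)) (sorted_list_of_set J)))
       = (\<Sum>t\<in>J. u t * lin g (TS t) (CS t))"
proof -
  have "lin g (concat (map TS (sorted_list_of_set J))) (concat (map (\<lambda>t. map ((*) (u t)) (CS t)) (sorted_list_of_set J)))
      = (\<Sum>t\<leftarrow>sorted_list_of_set J. lin g (TS t) (map ((*) (u t)) (CS t)))"
    by (rule lin_concat) (simp add: len)
  also have "\<dots> = (\<Sum>t\<leftarrow>sorted_list_of_set J. u t * lin g (TS t) (CS t))"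
    by (simp add: lin_scale)
  also have "\<dots> = (\<Sum>t\<in>J. u t * lin g (TS t) (CS t))"
    using J by (simp add: sum_list_distinct_conv_sum_set)
  finally show ?thesis .
qed

lemma fbm_prob: "is_fbm M H Z \<Longrightarrow> prob_space M" unfolding is_fbm_def by blast
lemma fbm_meas: "is_fbm M H Z \<Longrightarrow> 0 \<le> t \<Longrightarrow> Z t \<in> borel_measurable M" unfolding is_fbm_def by blast
lemma fbm_cont: "is_fbm M H Z \<Longrightarrow> \<omega> \<in> space M \<Longrightarrow> continuous_on {0..} (\<lambda>t. Z t \<omega>)"
  unfolding is_fbm_def by blast
lemma fbm_char: "is_fbm M H Z \<Longrightarrow> length ts = length cs \<Longrightarrow> (\<forall>t\<in>set ts. 0 \<le> t) \<Longrightarrow>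
        char (distr M borel (\<lambda>\<omega>. \<Sum>i<length ts. cs!i * Z (ts!i) \<omega>)) u =
        complex_of_real (exp (- (\<Sum>i<length ts. \<Sum>j<length ts.
              cs!i * cs!j * fbm_cov H (ts!i) (ts!j)) * u^2 / 2))"
  unfolding is_fbm_def by blast

lemma lin_meas:
  assumes "is_fbm M H Z" "length ts = length cs" "set ts \<subseteq> {0..}"
  shows "(\<lambda>\<omega>. lin (\<lambda>s. Z s \<omega>) ts cs) \<in> borel_measurable M"
proof -
  have "(\<lambda>\<omega>. \<Sum>i<length ts. cs ! i * Z (ts ! i) \<omega>) \<in> borel_measurable M"
  proof (intro borel_measurable_sum borel_measurable_times borel_measurable_const)
    fix i assume "i \<in> {..<length ts}"
    then have "ts ! i \<in> set ts" by simp
    then have "ts ! i \<in> {0..}" using assms(3) by blast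
    then have "0 \<le> ts ! i" by simp
    then show "Z (ts ! i) \<in> borel_measurable M" by (rule fbm_meas[OF assms(1)])
  qed
  then show ?thesis by (simp add: lin_nth[OF assms(2)])
qed

lemma fbm_iexp_eq:
  assumes f1: "is_fbm M H Z1" and f2: "is_fbm M H Z2"
    and len: "length ts = length cs" and pos: "set ts \<subseteq> {0..}"
  shows "(CLINT \<omega>|M. iexp (lin (\<lambda>s. Z1 s \<omega>) ts cs)) = (CLINT \<omega>|M. iexp (lin (\<lambda>s. Z2 s \<omega>) ts cs))"
proof -
  have key: "(CLINT \<omega>|M. iexp (lin (\<lambda>s. Z s \<omega>) ts cs)) =
        char (distr M borel (\<lambda>\<omega>. \<Sum>i<length ts. cs!i * Z (ts!i) \<omega>)) 1"
    if f: "is_fbm M H Z" for Z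
  proof -
    have m: "(\<lambda>\<omega>. \<Sum>i<length ts. cs!i * Z (ts!i) \<omega>) \<in> borel_measurable M"
      using lin_meas[OF f len pos] by (simp add: lin_nth[OF len])
    have "char (distr M borel (\<lambda>\<omega>. \<Sum>i<length ts. cs!i * Z (ts!i) \<omega>)) 1 =
        (CLINT x|distr M borel (\<lambda>\<omega>. \<Sum>i<length ts. cs!i * Z (ts!i) \<omega>). iexp (1 * x))"
      by (simp add: char_def)
    also have "\<dots> = (CLINT \<omega>|M. iexp (1 * (\<Sum>i<length ts. cs!i * Z (ts!i) \<omega>)))"
      by (rule integral_distr[OF m]) measurable
    finally show ?thesis by (simp add: lin_nth[OF len])
  qed
  have pos': "\<forall>t\<in>set ts. 0 \<le> t" using pos by auto
  show ?thesis
    using key[OF f1] key[OF f2] fbm_char[OF f1 len pos', of 1] fbm_char[OF f2 len pos', of 1] by simp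
qed



lemma GL:
  fixes T :: "real set"
  assumes f1: "is_fbm M H Z1" and f2: "is_fbm M H Z2"
   and lens: "\<And>n t. length (TS n t) = length (CS n t)"
   and pos: "\<And>n t. set (TS n t) \<subseteq> {0..}"
   and approx: "\<And>t g. t \<in> T \<Longrightarrow> continuous_on {0..} g \<Longrightarrow> (\<lambda>n. lin g (TS n t) (CS n t)) \<longlonglongrightarrow> Phi t g"
   and X1: "\<And>t \<omega>. t \<in> T \<Longrightarrow> \<omega> \<in> space M \<Longrightarrow> X1 t \<omega> = Phi t (\<lambda>s. Z1 s \<omega>)"
   and X2: "\<And>t \<omega>. t \<in> T \<Longrightarrow> \<omega> \<in> space M \<Longrightarrow> X2 t \<omega> = Phi t (\<lambda>s. Z2 s \<omega>)"
  shows "equal_law M T X1 X2"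
proof -
  have M: "prob_space M" by (rule fbm_prob[OF f1])
  interpret prob_space M by fact
  have conv: "(\<lambda>n. lin (\<lambda>s. Z s \<omega>) (TS n t) (CS n t)) \<longlonglongrightarrow> X t \<omega>"
    if f: "is_fbm M H Z" and X: "\<And>t \<omega>. t \<in> T \<Longrightarrow> \<omega> \<in> space M \<Longrightarrow> X t \<omega> = Phi t (\<lambda>s. Z s \<omega>)"
      and t: "t \<in> T" and \<omega>: "\<omega> \<in> space M" for Z X t \<omega>
    using approx[OF t fbm_cont[OF f \<omega>]] X[OF t \<omega>] by simp
  have meas: "X t \<in> borel_measurable M"
    if f: "is_fbm M H Z" and X: "\<And>t \<omega>. t \<in> T \<Longrightarrow> \<omega> \<in> space M \<Longrightarrow> X t \<omega> = Phi t (\<lambda>s. Z s \<omega>)"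
      and t: "t \<in> T" for Z X t
    by (rule borel_measurable_LIMSEQ_real[OF conv[OF f X t] lin_meas[OF f lens pos]])
  have m1: "\<And>t. t \<in> T \<Longrightarrow> X1 t \<in> borel_measurable M" by (rule meas[OF f1 X1])
  have m2: "\<And>t. t \<in> T \<Longrightarrow> X2 t \<in> borel_measurable M" by (rule meas[OF f2 X2])
  have fdd: "distr M (PiM J (\<lambda>_. borel)) (\<lambda>\<omega>. \<lambda>j\<in>J. X1 j \<omega>) = distr M (PiM J (\<lambda>_. borel)) (\<lambda>\<omega>. \<lambda>j\<in>J. X2 j \<omega>)"
    if J: "finite J" "J \<subseteq> T" for J
  proof (rule cramer_wold[OF M J(1)])
    show "\<And>j. j \<in> J \<Longrightarrow> X1 j \<in> borel_measurable M" using m1 J by auto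
    show "\<And>j. j \<in> J \<Longrightarrow> X2 j \<in> borel_measurable M" using m2 J by auto
    fix u :: "real \<Rightarrow> real"
    define TSJ where "TSJ n = concat (map (TS n) (sorted_list_of_set J))" for n
    define CSJ where "CSJ n = concat (map (\<lambda>t. map ((*) (u t)) (CS n t)) (sorted_list_of_set J))" for n
    have lenJ: "length (TSJ n) = length (CSJ n)" for n
      unfolding TSJ_def CSJ_def by (simp add: lens length_concat comp_def)
    have posJ: "set (TSJ n) \<subseteq> {0..}" for n
      unfolding TSJ_def using pos by auto
    have combine: "lin g (TSJ n) (CSJ n) = (\<Sum>t\<in>J. u t * lin g (TS n t) (CS n t))" for g n
      unfolding TSJ_def CSJ_def by (rule lin_combine[OF J(1) lens])
    have lim: "(\<lambda>n. CLINT \<omega>|M. iexp (lin (\<lambda>s. Z s \<omega>) (TSJ n) (CSJ n))) \<longlonglongrightarrow>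
               (CLINT \<omega>|M. iexp (\<Sum>j\<in>J. u j * X j \<omega>))"
      if f: "is_fbm M H Z" and X: "\<And>t \<omega>. t \<in> T \<Longrightarrow> \<omega> \<in> space M \<Longrightarrow> X t \<omega> = Phi t (\<lambda>s. Z s \<omega>)"
      for Z X
    proof (rule integral_dominated_convergence[where w="\<lambda>_. 1"])
      have mX: "\<And>j. j \<in> J \<Longrightarrow> X j \<in> borel_measurable M" using meas[OF f X] J by auto
      have [measurable]: "(\<lambda>\<omega>. \<Sum>j\<in>J. u j * X j \<omega>) \<in> borel_measurable M"
        using mX by (intro borel_measurable_sum borel_measurable_times borel_measurable_const) auto
      show "(\<lambda>\<omega>. iexp (\<Sum>j\<in>J. u j * X j \<omega>)) \<in> borel_measurable M" by measurable
      fix n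
      have [measurable]: "(\<lambda>\<omega>. lin (\<lambda>s. Z s \<omega>) (TSJ n) (CSJ n)) \<in> borel_measurable M"
        by (rule lin_meas[OF f lenJ posJ])
      show "(\<lambda>\<omega>. iexp (lin (\<lambda>s. Z s \<omega>) (TSJ n) (CSJ n))) \<in> borel_measurable M" by measurable
      show "AE \<omega> in M. norm (iexp (lin (\<lambda>s. Z s \<omega>) (TSJ n) (CSJ n))) \<le> 1"
        by (simp add: norm_exp_i_times)
    next
      show "integrable M (\<lambda>_. 1::real)" by simp
      show "AE \<omega> in M. (\<lambda>n. iexp (lin (\<lambda>s. Z s \<omega>) (TSJ n) (CSJ n))) \<longlonglongrightarrow> iexp (\<Sum>j\<in>J. u j * X j \<omega>)"
      proof (rule AE_I2)
        fix \<omega> assume \<omega>: "\<omega> \<in> space M"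
        have "(\<lambda>n. \<Sum>t\<in>J. u t * lin (\<lambda>s. Z s \<omega>) (TS n t) (CS n t)) \<longlonglongrightarrow> (\<Sum>j\<in>J. u j * X j \<omega>)"
          using J by (intro tendsto_sum tendsto_mult_left conv[OF f X _ \<omega>]) auto
        then have "(\<lambda>n. lin (\<lambda>s. Z s \<omega>) (TSJ n) (CSJ n)) \<longlonglongrightarrow> (\<Sum>j\<in>J. u j * X j \<omega>)"
          by (simp add: combine)
        then show "(\<lambda>n. iexp (lin (\<lambda>s. Z s \<omega>) (TSJ n) (CSJ n))) \<longlonglongrightarrow> iexp (\<Sum>j\<in>J. u j * X j \<omega>)"
          by (intro tendsto_intros)
      qed
    qed
    have eqn: "(CLINT \<omega>|M. iexp (lin (\<lambda>s. Z1 s \<omega>) (TSJ n) (CSJ n))) = (CLINT \<omega>|M. iexp (lin (\<lambda>s. Z2 s \<omega>) (TSJ n) (CSJ n)))" for n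
      by (rule fbm_iexp_eq[OF f1 f2 lenJ posJ])
    show "(CLINT \<omega>|M. iexp (\<Sum>j\<in>J. u j * X1 j \<omega>)) = (CLINT \<omega>|M. iexp (\<Sum>j\<in>J. u j * X2 j \<omega>))"
      using LIMSEQ_unique[OF lim[OF f1 X1]] lim[OF f2 X2] eqn by simp
  qed
  let ?V1 = "\<lambda>\<omega>. \<lambda>t\<in>T. X1 t \<omega>" and ?V2 = "\<lambda>\<omega>. \<lambda>t\<in>T. X2 t \<omega>"
  have mV1: "?V1 \<in> M \<rightarrow>\<^sub>M PiM T (\<lambda>_. borel)" by (rule measurable_restrict) (use m1 in auto)
  have mV2: "?V2 \<in> M \<rightarrow>\<^sub>M PiM T (\<lambda>_. borel)" by (rule measurable_restrict) (use m2 in auto)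
  have pre: "emeasure (distr M (PiM T (\<lambda>_. borel)) (\<lambda>\<omega>. \<lambda>t\<in>T. X t \<omega>)) (prod_emb T (\<lambda>_. borel) J (Pi\<^sub>E J A))
      = emeasure (distr M (PiM J (\<lambda>_. borel)) (\<lambda>\<omega>. \<lambda>j\<in>J. X j \<omega>)) (Pi\<^sub>E J A)"
    if J: "finite J" "J \<subseteq> T" and A: "\<And>i. i \<in> J \<Longrightarrow> A i \<in> sets borel"
      and mX: "\<And>t. t \<in> T \<Longrightarrow> X t \<in> borel_measurable M" for J A X
  proof -
    have mV: "(\<lambda>\<omega>. \<lambda>t\<in>T. X t \<omega>) \<in> M \<rightarrow>\<^sub>M PiM T (\<lambda>_. borel)" by (rule measurable_restrict) (use mX in auto)
    have mW: "(\<lambda>\<omega>. \<lambda>j\<in>J. X j \<omega>) \<in> M \<rightarrow>\<^sub>M PiM J (\<lambda>_. borel)" by (rule measurable_restrict) (use mX J in auto)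
    have s1: "prod_emb T (\<lambda>_. borel) J (Pi\<^sub>E J A) \<in> sets (PiM T (\<lambda>_. borel))"
      using J A by (intro sets_PiM_I) auto
    have s2: "Pi\<^sub>E J A \<in> sets (PiM J (\<lambda>_. borel))"
      using J A by (intro sets_PiM_I_finite) auto
    have "(\<lambda>\<omega>. \<lambda>t\<in>T. X t \<omega>) -` prod_emb T (\<lambda>_. borel) J (Pi\<^sub>E J A) \<inter> space M =
          (\<lambda>\<omega>. \<lambda>j\<in>J. X j \<omega>) -` Pi\<^sub>E J A \<inter> space M"
      using J by (auto simp: prod_emb_def PiE_def Pi_def restrict_def extensional_def)
    then show ?thesis by (simp add: emeasure_distr[OF mV s1] emeasure_distr[OF mW s2])
  qed
  show ?thesis
    unfolding equal_law_def
  proof (rule measure_eqI_PiM_infinite)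
    show "sets (distr M (PiM T (\<lambda>_. borel)) ?V1) = sets (PiM T (\<lambda>_. borel))" by simp
    show "sets (distr M (PiM T (\<lambda>_. borel)) ?V2) = sets (PiM T (\<lambda>_. borel))" by simp
    show "finite_measure (distr M (PiM T (\<lambda>_. borel)) ?V1)"
      by (rule prob_space.finite_measure[OF prob_space_distr[OF mV1]])
    fix A :: "real \<Rightarrow> real set" and J assume J: "finite J" "J \<subseteq> T" and A: "\<And>i. i \<in> J \<Longrightarrow> A i \<in> sets borel"
    show "emeasure (distr M (PiM T (\<lambda>_. borel)) ?V1) (prod_emb T (\<lambda>_. borel) J (Pi\<^sub>E J A)) =
          emeasure (distr M (PiM T (\<lambda>_. borel)) ?V2) (prod_emb T (\<lambda>_. borel) J (Pi\<^sub>E J A))"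
      using pre[OF J A m1] pre[OF J A m2] fdd[OF J] by simp
  qed
qed



lemma riemann_piece:
  fixes F :: "real \<Rightarrow> real"
  assumes cont: "continuous_on {a..b} F" and ab: "a \<le> b"
    and close: "\<And>x. x \<in> {a..b} \<Longrightarrow> \<bar>F x - F a\<bar> \<le> e" and e: "0 \<le> e"
  shows "\<bar>integral {a..b} F - (b - a) * F a\<bar> \<le> (b - a) * e"
proof -
  have I: "(F has_integral integral {a..b} F) {a..b}"
    by (rule integrable_integral[OF integrable_continuous_interval[OF cont]])
  have "((\<lambda>x. F x - F a) has_integral (integral {a..b} F - (b - a) * F a)) {a..b}"
    using has_integral_diff[OF I has_integral_const_real[of "F a" a b]] ab by (simp add: content_real)
  then have "((\<lambda>x. F x - F a) has_integral (integral {a..b} F - (b - a) * F a)) (cbox a b)"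
    by simp
  from has_integral_bound[OF e this] close
  have "norm (integral {a..b} F - (b - a) * F a) \<le> e * Henstock_Kurzweil_Integration.content (cbox a b)" by simp
  then show ?thesis using ab by (simp add: content_real mult.commute)
qed

lemma riemann_split:
  fixes F :: "real \<Rightarrow> real"
  assumes cont: "continuous_on {0..t} F" and h: "0 \<le> h" and Nh: "real N * h \<le> t"
  shows "m \<le> N \<Longrightarrow> integral {0..real m * h} F = (\<Sum>k<m. integral {real k * h..real (Suc k) * h} F)"
proof (induction m)
  case 0 then show ?case by simp
next
  case (Suc m)
  have "real (Suc m) \<le> real N" using Suc.prems by simp
  then have "real (Suc m) * h \<le> real N * h" by (rule mult_right_mono) (use h in simp)
  then have le: "real (Suc m) * h \<le> t" using Nh by linarith
  have "integral {0..real m * h} F + integral {real m * h..real (Suc m) * h} F = integral {0..real (Suc m) * h} F"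
  proof (rule Henstock_Kurzweil_Integration.integral_combine)
    show "0 \<le> real m * h" using h by simp
    show "real m * h \<le> real (Suc m) * h" using h by (simp add: mult_right_mono)
    show "F integrable_on {0..real (Suc m) * h}"
      by (rule integrable_continuous_interval[OF continuous_on_subset[OF cont]]) (use le in auto)
  qed
  then show ?case using Suc by simp
qed

lemma riemann:
  fixes F :: "real \<Rightarrow> real"
  assumes cont: "continuous_on {0..t} F" and t: "0 \<le> t"
  shows "(\<lambda>n. \<Sum>k<Suc n. t / real (Suc n) * F (real k * t / real (Suc n))) \<longlonglongrightarrow> integral {0..t} F"
proof (rule LIMSEQ_I)
  fix r :: real assume r: "0 < r"
  define e where "e = r / (t + 1)"
  have e: "0 < e" unfolding e_def using r t by simp
  have te: "t * e < r" unfolding e_def using r t by (simp add: field_simps)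
  have "uniformly_continuous_on {0..t} F" by (rule compact_uniformly_continuous[OF cont compact_Icc])
  then obtain d where d: "d > 0" and dd: "\<And>x x'. x \<in> {0..t} \<Longrightarrow> x' \<in> {0..t} \<Longrightarrow> dist x' x < d \<Longrightarrow> dist (F x') (F x) < e"
    unfolding uniformly_continuous_on_def using e by metis
  obtain N0 :: nat where N0: "t / d < real N0" using reals_Archimedean2 by blast
  show "\<exists>no. \<forall>n\<ge>no. norm ((\<Sum>k<Suc n. t / real (Suc n) * F (real k * t / real (Suc n))) - integral {0..t} F) < r"
  proof (intro exI allI impI)
    fix n assume n: "N0 \<le> n"
    define N where "N = Suc n"
    define h where "h = t / real N"
    have Npos: "0 < real N" unfolding N_def by simp
    have h0: "0 \<le> h" unfolding h_def using t Npos by simp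
    have Nh: "real N * h = t" unfolding h_def using Npos by simp
    have "t / d < real N" using N0 n unfolding N_def by linarith
    then have "t < d * real N" using d by (simp add: divide_less_eq mult.commute)
    then have hd: "h < d" unfolding h_def using Npos by (simp add: divide_less_eq mult.commute)
    have split: "integral {0..t} F = (\<Sum>k<N. integral {real k * h..real (Suc k) * h} F)"
      using riemann_split[OF cont h0, of N N] Nh by simp
    have piece: "\<bar>integral {real k * h..real (Suc k) * h} F - h * F (real k * h)\<bar> \<le> h * e"
      if k: "k < N" for k
    proof -
      have sub: "{real k * h..real (Suc k) * h} \<subseteq> {0..t}"
      proof -
        have "real (Suc k) \<le> real N" using k by simp
        then have "real (Suc k) * h \<le> t" using Nh h0 by (metis mult_right_mono)
        moreover have "0 \<le> real k * h" using h0 by simp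
        ultimately show ?thesis by auto
      qed
      have hh: "real (Suc k) * h - real k * h = h" by (simp add: algebra_simps)
      have "\<bar>integral {real k * h..real (Suc k) * h} F - (real (Suc k) * h - real k * h) * F (real k * h)\<bar>
            \<le> (real (Suc k) * h - real k * h) * e"
      proof (rule riemann_piece)
        show "continuous_on {real k * h..real (Suc k) * h} F" by (rule continuous_on_subset[OF cont sub])
        show "real k * h \<le> real (Suc k) * h" using h0 by (simp add: mult_right_mono)
        show "0 \<le> e" using e by simp
        fix x assume x: "x \<in> {real k * h..real (Suc k) * h}"
        have "dist x (real k * h) < d" using x hh hd by (auto simp: dist_real_def)
        moreover have "real k * h \<in> {real k * h..real (Suc k) * h}" using h0 by (simp add: mult_right_mono)
        then have "real k * h \<in> {0..t}" using sub by blast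
        moreover have "x \<in> {0..t}" using sub x by blast
        ultimately have "dist (F x) (F (real k * h)) < e" using dd by blast
        then show "\<bar>F x - F (real k * h)\<bar> \<le> e" by (simp add: dist_real_def)
      qed
      then show ?thesis by (simp only: hh)
    qed
    have sumeq: "(\<Sum>k<Suc n. t / real (Suc n) * F (real k * t / real (Suc n))) = (\<Sum>k<N. h * F (real k * h))"
      unfolding N_def h_def by (intro sum.cong) (auto simp: field_simps)
    have "\<bar>(\<Sum>k<N. h * F (real k * h)) - (\<Sum>k<N. integral {real k * h..real (Suc k) * h} F)\<bar>
          = \<bar>\<Sum>k<N. (integral {real k * h..real (Suc k) * h} F - h * F (real k * h))\<bar>"
      by (simp add: sum_subtractf abs_minus_commute)
    also have "\<dots> \<le> (\<Sum>k<N. \<bar>integral {real k * h..real (Suc k) * h} F - h * F (real k * h)\<bar>)"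
      by (rule sum_abs)
    also have "\<dots> \<le> (\<Sum>k<N. h * e)" by (rule sum_mono) (use piece in auto)
    also have "\<dots> = t * e" using Nh by simp
    finally show "norm ((\<Sum>k<Suc n. t / real (Suc n) * F (real k * t / real (Suc n))) - integral {0..t} F) < r"
      using te by (simp only: sumeq split real_norm_def)
  qed
qed



definition Yf :: "real \<Rightarrow> real \<Rightarrow> (real \<Rightarrow> real) \<Rightarrow> real \<Rightarrow> real" where
  "Yf H a g t = exp (- a * t) * g (time_change H a t) - g (time_change H a 0)
     + a * integral {0..t} (\<lambda>s. exp (- a * s) * g (time_change H a s))"

lemma Yproc_Yf: "Yproc H Z a t \<omega> = Yf H a (\<lambda>s. Z s \<omega>) t"
  by (simp add: Yproc_def Yf_def)

definition TSY :: "real \<Rightarrow> real \<Rightarrow> nat \<Rightarrow> real \<Rightarrow> real list" where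
  "TSY H a n t = [time_change H a t, time_change H a 0] @
     map (\<lambda>k. time_change H a (real k * t / real (Suc n))) [0..<Suc n]"
definition CSY :: "real \<Rightarrow> nat \<Rightarrow> real \<Rightarrow> real list" where
  "CSY a n t = [exp (- a * t), -1] @
     map (\<lambda>k. a * (t / real (Suc n) * exp (- a * (real k * t / real (Suc n))))) [0..<Suc n]"

lemma lin_map: "lin g (map f xs) (map c xs) = (\<Sum>x\<leftarrow>xs. c x * g (f x))"
  by (induction xs) (simp_all add: lin_def)

lemma tc_pos: "0 < H \<Longrightarrow> 0 < a \<Longrightarrow> 0 < time_change H a s"
  unfolding time_change_def by simp

lemma tc_cont: "0 < H \<Longrightarrow> 0 < a \<Longrightarrow> continuous_on S (time_change H a)"
  unfolding time_change_def by (intro continuous_intros) auto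

lemma len_TSY: "length (TSY H a n t) = length (CSY a n t)"
  by (simp add: TSY_def CSY_def)

lemma pos_TSY: "0 < H \<Longrightarrow> 0 < a \<Longrightarrow> set (TSY H a n t) \<subseteq> {0..}"
  by (auto simp: TSY_def less_imp_le tc_pos)

lemma lin_TSY:
  "lin g (TSY H a n t) (CSY a n t) = exp (- a * t) * g (time_change H a t) - g (time_change H a 0)
     + a * (\<Sum>k<Suc n. t / real (Suc n) * (exp (- a * (real k * t / real (Suc n))) * g (time_change H a (real k * t / real (Suc n)))))"
proof -
  have "lin g (TSY H a n t) (CSY a n t) = lin g [time_change H a t, time_change H a 0] [exp (- a * t), -1]
     + lin g (map (\<lambda>k. time_change H a (real k * t / real (Suc n))) [0..<Suc n])
             (map (\<lambda>k. a * (t / real (Suc n) * exp (- a * (real k * t / real (Suc n))))) [0..<Suc n])"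
    unfolding TSY_def CSY_def by (rule lin_append) simp
  also have "lin g [time_change H a t, time_change H a 0] [exp (- a * t), -1] =
       exp (- a * t) * g (time_change H a t) - g (time_change H a 0)"
    by (simp add: lin_def)
  also have "lin g (map (\<lambda>k. time_change H a (real k * t / real (Suc n))) [0..<Suc n])
             (map (\<lambda>k. a * (t / real (Suc n) * exp (- a * (real k * t / real (Suc n))))) [0..<Suc n])
     = (\<Sum>k\<leftarrow>[0..<Suc n]. a * (t / real (Suc n) * exp (- a * (real k * t / real (Suc n)))) *
                 g (time_change H a (real k * t / real (Suc n))))"
    by (rule lin_map)
  also have "\<dots> = (\<Sum>k<Suc n. a * (t / real (Suc n) * exp (- a * (real k * t / real (Suc n)))) *
                 g (time_change H a (real k * t / real (Suc n))))"
    by (simp add: interv_sum_list_conv_sum_set_nat atLeast0LessThan)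
  also have "\<dots> = a * (\<Sum>k<Suc n. t / real (Suc n) * (exp (- a * (real k * t / real (Suc n))) * g (time_change H a (real k * t / real (Suc n)))))"
    by (simp only: sum_distrib_left mult.assoc)
  finally show ?thesis .
qed

lemma Y_approx:
  assumes H: "0 < H" and a: "0 < a" and t: "t \<in> {0..}" and g: "continuous_on {0..} g"
  shows "(\<lambda>n. lin g (TSY H a n t) (CSY a n t)) \<longlonglongrightarrow> Yf H a g t"
proof -
  define F where "F s = exp (- a * s) * g (time_change H a s)" for s
  have cF: "continuous_on {0..t} F"
  proof -
    have "continuous_on {0..t} (\<lambda>s. g (time_change H a s))"
      by (rule continuous_on_compose2[OF g tc_cont[OF H a]]) (auto simp: less_imp_le tc_pos[OF H a])
    then show ?thesis unfolding F_def by (intro continuous_intros)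
  qed
  have "(\<lambda>n. \<Sum>k<Suc n. t / real (Suc n) * F (real k * t / real (Suc n))) \<longlonglongrightarrow> integral {0..t} F"
    by (rule riemann[OF cF]) (use t in simp)
  then have "(\<lambda>n. exp (- a * t) * g (time_change H a t) - g (time_change H a 0) + a * (\<Sum>k<Suc n. t / real (Suc n) * F (real k * t / real (Suc n))))
      \<longlonglongrightarrow> exp (- a * t) * g (time_change H a t) - g (time_change H a 0) + a * integral {0..t} F"
    by (intro tendsto_intros)
  then show ?thesis unfolding lin_TSY Yf_def F_def .
qed

lemma Y_equal_law:
  assumes f1: "is_fbm M H Z1" and f2: "is_fbm M H Z2" and H: "0 < H" and a: "0 < a"
  shows "equal_law M {0..} (Yproc H Z1 a) (Yproc H Z2 a)"
  by (rule GL[OF f1 f2, where TS = "\<lambda>n t. TSY H a n t" and CS = "\<lambda>n t. CSY a n t" and Phi = "\<lambda>t g. Yf H a g t"])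
     (simp_all add: len_TSY pos_TSY[OF H a] Y_approx[OF H a] Yproc_Yf)

lemma equal_law_cong:
  assumes "\<And>t \<omega>. t \<in> T \<Longrightarrow> \<omega> \<in> space M \<Longrightarrow> X t \<omega> = X' t \<omega>"
    and "\<And>t \<omega>. t \<in> T \<Longrightarrow> \<omega> \<in> space M \<Longrightarrow> Y t \<omega> = Y' t \<omega>"
  shows "equal_law M T X Y = equal_law M T X' Y'"
proof -
  have "distr M (PiM T (\<lambda>_. borel)) (\<lambda>\<omega>. \<lambda>t\<in>T. X t \<omega>) = distr M (PiM T (\<lambda>_. borel)) (\<lambda>\<omega>. \<lambda>t\<in>T. X' t \<omega>)"
    by (rule distr_cong) (auto simp: assms(1) restrict_def)
  moreover have "distr M (PiM T (\<lambda>_. borel)) (\<lambda>\<omega>. \<lambda>t\<in>T. Y t \<omega>) = distr M (PiM T (\<lambda>_. borel)) (\<lambda>\<omega>. \<lambda>t\<in>T. Y' t \<omega>)"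
    by (rule distr_cong) (auto simp: assms(2) restrict_def)
  ultimately show ?thesis unfolding equal_law_def by simp
qed



lemma fbm_cov_scale:
  assumes c: "0 < c" and x: "0 \<le> x" and y: "0 \<le> y"
  shows "c powr (-H) * c powr (-H) * fbm_cov H (c*x) (c*y) = fbm_cov H x y"
proof -
  have e1: "(c*x) powr (2*H) = c powr (2*H) * x powr (2*H)" by (rule powr_mult)
  have e2: "(c*y) powr (2*H) = c powr (2*H) * y powr (2*H)" by (rule powr_mult)
  have "\<bar>c*x - c*y\<bar> = c * \<bar>x - y\<bar>" using c by (simp add: abs_mult right_diff_distrib[symmetric])
  then have e3: "\<bar>c*x - c*y\<bar> powr (2*H) = c powr (2*H) * \<bar>x - y\<bar> powr (2*H)" by (simp add: powr_mult)
  have k: "c powr (-H) * c powr (-H) * c powr (2*H) = 1"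
    using c by (simp add: powr_add[symmetric])
  have "c powr (-H) * c powr (-H) * fbm_cov H (c*x) (c*y)
      = (c powr (-H) * c powr (-H) * c powr (2*H)) * fbm_cov H x y"
    unfolding fbm_cov_def e1 e2 e3 by (simp add: algebra_simps)
  then show ?thesis using k by simp
qed

lemma fbm_scale:
  assumes f: "is_fbm M H Z" and c: "0 < c"
  shows "is_fbm M H (\<lambda>x \<omega>. c powr (-H) * Z (c * x) \<omega>)"
  unfolding is_fbm_def
proof (intro conjI)
  show "prob_space M" by (rule fbm_prob[OF f])
  show "\<forall>t\<ge>0. (\<lambda>\<omega>. c powr (-H) * Z (c * t) \<omega>) \<in> borel_measurable M"
  proof (intro allI impI)
    fix t :: real assume "0 \<le> t"
    then have "0 \<le> c * t" using c by simp
    then show "(\<lambda>\<omega>. c powr (-H) * Z (c * t) \<omega>) \<in> borel_measurable M"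
      by (intro borel_measurable_times borel_measurable_const fbm_meas[OF f])
  qed
  show "\<forall>\<omega>\<in>space M. continuous_on {0..} (\<lambda>t. c powr (-H) * Z (c * t) \<omega>)"
  proof
    fix \<omega> assume \<omega>: "\<omega> \<in> space M"
    have "continuous_on {0..} (\<lambda>t. Z (c * t) \<omega>)"
      by (rule continuous_on_compose2[OF fbm_cont[OF f \<omega>]]) (use c in \<open>auto intro!: continuous_intros\<close>)
    then show "continuous_on {0..} (\<lambda>t. c powr (-H) * Z (c * t) \<omega>)" by (intro continuous_intros)
  qed
  show "\<forall>(ts::real list) (cs::real list) (u::real).
        length ts = length cs \<and> (\<forall>t\<in>set ts. 0 \<le> t) \<longrightarrow>
        char (distr M borel (\<lambda>\<omega>. \<Sum>i<length ts. cs!i * (c powr (-H) * Z (c * ts!i) \<omega>))) u =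
        complex_of_real (exp (- (\<Sum>i<length ts. \<Sum>j<length ts.
              cs!i * cs!j * fbm_cov H (ts!i) (ts!j)) * u^2 / 2))"
  proof (intro allI impI)
    fix ts cs :: "real list" and u :: real
    assume a: "length ts = length cs \<and> (\<forall>t\<in>set ts. 0 \<le> t)"
    define k where "k = c powr (-H)"
    define ts' where "ts' = map ((*) c) ts"
    define cs' where "cs' = map ((*) k) cs"
    have len: "length ts' = length cs'" using a by (simp add: ts'_def cs'_def)
    have pos: "\<forall>t\<in>set ts'. 0 \<le> t" using a c by (auto simp: ts'_def)
    have eqf: "(\<lambda>\<omega>. \<Sum>i<length ts. cs!i * (c powr (-H) * Z (c * ts!i) \<omega>)) = (\<lambda>\<omega>. \<Sum>i<length ts'. cs'!i * Z (ts'!i) \<omega>)"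
    proof (rule ext)
      fix \<omega>
      show "(\<Sum>i<length ts. cs!i * (c powr (-H) * Z (c * ts!i) \<omega>)) = (\<Sum>i<length ts'. cs'!i * Z (ts'!i) \<omega>)"
        unfolding ts'_def cs'_def k_def using a by (intro sum.cong) auto
    qed
    have pos0: "0 \<le> ts ! i" if "i < length ts" for i
      using a that nth_mem[OF that] by blast
    have eqQ: "(\<Sum>i<length ts'. \<Sum>j<length ts'. cs'!i * cs'!j * fbm_cov H (ts'!i) (ts'!j))
        = (\<Sum>i<length ts. \<Sum>j<length ts. cs!i * cs!j * fbm_cov H (ts!i) (ts!j))"
    proof (rule sum.cong)
      show "{..<length ts'} = {..<length ts}" by (simp add: ts'_def)
      fix i assume i: "i \<in> {..<length ts}"
      show "(\<Sum>j<length ts'. cs'!i * cs'!j * fbm_cov H (ts'!i) (ts'!j)) = (\<Sum>j<length ts. cs!i * cs!j * fbm_cov H (ts!i) (ts!j))"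
      proof (rule sum.cong)
        show "{..<length ts'} = {..<length ts}" by (simp add: ts'_def)
        fix j assume j: "j \<in> {..<length ts}"
        have "cs'!i * cs'!j * fbm_cov H (ts'!i) (ts'!j) = cs!i * cs!j * (k * k * fbm_cov H (c * ts!i) (c * ts!j))"
          using i j a by (simp add: ts'_def cs'_def)
        also have "k * k * fbm_cov H (c * ts!i) (c * ts!j) = fbm_cov H (ts!i) (ts!j)"
          unfolding k_def using i j by (intro fbm_cov_scale[OF c] pos0) auto
        finally show "cs'!i * cs'!j * fbm_cov H (ts'!i) (ts'!j) = cs!i * cs!j * fbm_cov H (ts!i) (ts!j)" by simp
      qed
    qed
    show "char (distr M borel (\<lambda>\<omega>. \<Sum>i<length ts. cs!i * (c powr (-H) * Z (c * ts!i) \<omega>))) u =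
        complex_of_real (exp (- (\<Sum>i<length ts. \<Sum>j<length ts.
              cs!i * cs!j * fbm_cov H (ts!i) (ts!j)) * u^2 / 2))"
      unfolding eqf eqQ[symmetric] by (rule fbm_char[OF f len pos])
  qed
qed



lemma integral_scale:
  fixes f :: "real \<Rightarrow> real"
  assumes cont: "continuous_on {0..t} f" and t: "0 \<le> t" and A: "0 < A"
  shows "A * integral {0..t/A} (\<lambda>s. f (A * s)) = integral {0..t} f"
proof -
  have I: "(f has_integral integral {0..t} f) (cbox 0 t)"
    using integrable_integral[OF integrable_continuous_interval[OF cont]] by simp
  have img: "(\<lambda>x. (1 / A) *\<^sub>R x + - ((1 / A) *\<^sub>R 0)) ` cbox 0 t = {0..t/A}"
  proof -
    have "(\<lambda>x. (1 / A) *\<^sub>R x + - ((1 / A) *\<^sub>R 0)) ` cbox 0 t = (*) (1/A) ` {0..t}" by simp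
    also have "\<dots> = {0..t/A}" using A by (simp add: image_mult_atLeastAtMost)
    finally show ?thesis .
  qed
  from has_integral_affinity[OF I, of A 0] A
  have "((\<lambda>x. f (A * x)) has_integral (1 / A) * integral {0..t} f) {0..t/A}"
    unfolding img by simp
  then have "integral {0..t/A} (\<lambda>s. f (A * s)) = (1 / A) * integral {0..t} f"
    by (rule integral_unique)
  then show ?thesis using A by simp
qed

lemma Yf_zero: "Yf H a g 0 = 0"
  by (simp add: Yf_def)

lemma Yf_scale:
  assumes H: "0 < H" and A: "0 < A" and g: "continuous_on {0..} g" and t: "0 \<le> t"
  shows "A powr H * Yf H A g (t/A) = Yf H 1 (\<lambda>x. (1/A) powr (-H) * g ((1/A) * x)) t"
proof -
  define c where "c = 1/A"
  define k where "k = c powr (-H)"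
  have k: "k = A powr H" unfolding k_def c_def using A by (simp add: powr_minus_divide powr_divide)
  have tc1: "time_change H A (t/A) = c * time_change H 1 t"
    unfolding time_change_def c_def using A by simp
  have tc0: "time_change H A 0 = c * time_change H 1 0"
    unfolding time_change_def c_def using A by simp
  have tcs: "c * time_change H 1 (A * s) = time_change H A s" for s
    unfolding time_change_def c_def using A by simp
  define f where "f u = exp (- 1 * u) * g (c * time_change H 1 u)" for u
  have cf: "continuous_on {0..t} f"
  proof -
    have tc1c: "continuous_on {0..t} (time_change H 1)" by (rule tc_cont[OF H]) simp
    have "continuous_on {0..t} (\<lambda>u. c * time_change H 1 u)"
      by (rule continuous_on_mult[OF continuous_on_const tc1c])
    moreover have "(\<lambda>u. c * time_change H 1 u) ` {0..t} \<subseteq> {0..}"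
    proof -
      have cp: "0 < c" unfolding c_def using A by simp
      have "0 \<le> c * time_change H 1 u" for u
        using cp tc_pos[OF H zero_less_one, of u] by simp
      then show ?thesis by auto
    qed
    ultimately have "continuous_on {0..t} (\<lambda>u. g (c * time_change H 1 u))"
      by (rule continuous_on_compose2[OF g])
    then show ?thesis unfolding f_def by (intro continuous_intros)
  qed
  have int: "A * integral {0..t/A} (\<lambda>s. exp (- A * s) * g (time_change H A s)) = integral {0..t} f"
  proof -
    have "(\<lambda>s. exp (- A * s) * g (time_change H A s)) = (\<lambda>s. f (A * s))"
      unfolding f_def by (rule ext) (simp add: tcs)
    then show ?thesis using integral_scale[OF cf t A] by simp
  qed
  have int2: "integral {0..t} (\<lambda>s. exp (- 1 * s) * (k * g (c * time_change H 1 s))) = k * integral {0..t} f"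
  proof -
    have "(\<lambda>s. exp (- 1 * s) * (k * g (c * time_change H 1 s))) = (\<lambda>s. k * f s)"
      unfolding f_def by (rule ext) simp
    then show ?thesis by (simp add: integral_mult_right)
  qed
  have ex: "exp (- A * (t / A)) = exp (- 1 * t)" using A by simp
  have "A powr H * Yf H A g (t/A) =
      k * (exp (- 1 * t) * g (c * time_change H 1 t) - g (c * time_change H 1 0) + integral {0..t} f)"
    unfolding Yf_def k ex tc1 tc0 using int by simp
  also have "\<dots> = Yf H 1 (\<lambda>x. k * g (c * x)) t"
    unfolding Yf_def int2 by (simp add: algebra_simps)
  finally show ?thesis unfolding k_def c_def .
qed

lemma Yf_shift:
  assumes H: "0 < H" and a: "0 < a" and g: "continuous_on {0..} g" and t: "0 \<le> t" and h: "0 \<le> h"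
  shows "Yf H a g (t + h) - Yf H a g h = Yf H a (\<lambda>x. (exp (a*h/H)) powr (-H) * g (exp (a*h/H) * x)) t"
proof -
  define c where "c = exp (a*h/H)"
  define k where "k = c powr (-H)"
  have k: "k = exp (- a * h)" unfolding k_def c_def powr_def using H by simp
  have tcs: "time_change H a (s + h) = c * time_change H a s" for s
    unfolding time_change_def c_def by (simp add: distrib_left add_divide_distrib exp_add)
  define F where "F s = exp (- a * s) * g (time_change H a s)" for s
  have cF: "continuous_on {0..t+h} F"
  proof -
    have "continuous_on {0..t+h} (\<lambda>s. g (time_change H a s))"
      by (rule continuous_on_compose2[OF g tc_cont[OF H a]]) (auto simp: less_imp_le tc_pos[OF H a])
    then show ?thesis unfolding F_def by (intro continuous_intros)
  qed
  have comb: "integral {0..h} F + integral {h..t+h} F = integral {0..t+h} F"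
    by (rule Henstock_Kurzweil_Integration.integral_combine)
       (use t h in \<open>auto intro: integrable_continuous_interval[OF cF]\<close>)
  have shift: "integral {h..t+h} F = integral {0..t} (\<lambda>u. exp (- a * u) * (k * g (c * time_change H a u)))"
  proof -
    have "integral {0..t} (F \<circ> (+) h) = integral {0 + h..t + h} F" by (rule integral_shift_Icc_real)
    moreover have "F \<circ> (+) h = (\<lambda>u. exp (- a * u) * (k * g (c * time_change H a u)))"
    proof (rule ext)
      fix u
      have "exp (- a * (h + u)) = exp (- a * u) * k" unfolding k by (simp add: distrib_left exp_add[symmetric] algebra_simps)
      moreover have "time_change H a (h + u) = c * time_change H a u" using tcs[of u] by (simp add: add.commute)
      ultimately show "(F \<circ> (+) h) u = exp (- a * u) * (k * g (c * time_change H a u))"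
        unfolding F_def by simp
    qed
    ultimately show ?thesis by simp
  qed
  have e1: "exp (- a * (t + h)) = exp (- a * t) * k" unfolding k by (simp add: distrib_left exp_add[symmetric] algebra_simps)
  have e2: "exp (- a * h) = k" unfolding k ..
  have tch: "time_change H a h = c * time_change H a 0" using tcs[of 0] by simp
  have tcth: "time_change H a (t + h) = c * time_change H a t" by (rule tcs)
  have "Yf H a g (t + h) - Yf H a g h = exp (- a * (t + h)) * g (time_change H a (t + h)) - exp (- a * h) * g (time_change H a h)
      + a * (integral {0..t+h} F - integral {0..h} F)"
    unfolding Yf_def F_def by (simp add: algebra_simps)
  also have "\<dots> = exp (- a * t) * (k * g (c * time_change H a t)) - k * g (c * time_change H a 0)
      + a * integral {0..t} (\<lambda>u. exp (- a * u) * (k * g (c * time_change H a u)))"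
  proof -
    have diff: "integral {0..t+h} F - integral {0..h} F = integral {0..t} (\<lambda>u. exp (- a * u) * (k * g (c * time_change H a u)))"
      using comb shift by linarith
    show ?thesis unfolding e1 e2 tch tcth diff by (simp add: algebra_simps)
  qed
  also have "\<dots> = Yf H a (\<lambda>x. k * g (c * x)) t" unfolding Yf_def by simp
  finally show ?thesis unfolding k_def c_def .
qed

theorem proposition3p2:
  fixes M :: "'w measure" and H :: real and Z :: "real \<Rightarrow> 'w \<Rightarrow> real"
  assumes "0 < H" "H < 1"
    and "is_fbm M H Z"
  shows "\<forall>\<alpha>>0.
           equal_law M {0..} (\<lambda>t \<omega>. \<alpha> powr H * Yproc H Z \<alpha> (t / \<alpha>) \<omega>) (Yproc H Z 1)
         \<and> stationary_increments M (Yproc H Z \<alpha>)"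
proof (intro allI impI conjI)
  fix \<alpha> :: real assume a: "0 < \<alpha>"
  have H: "0 < H" by fact
  have f: "is_fbm M H Z" by fact
  define Z' where "Z' = (\<lambda>x \<omega>. (1/\<alpha>) powr (-H) * Z ((1/\<alpha>) * x) \<omega>)"
  have f': "is_fbm M H Z'" unfolding Z'_def by (rule fbm_scale[OF f]) (use a in simp)
  have "equal_law M {0..} (Yproc H Z' 1) (Yproc H Z 1)" by (rule Y_equal_law[OF f' f H]) simp
  moreover have "equal_law M {0..} (\<lambda>t \<omega>. \<alpha> powr H * Yproc H Z \<alpha> (t / \<alpha>) \<omega>) (Yproc H Z 1) =
                 equal_law M {0..} (Yproc H Z' 1) (Yproc H Z 1)"
  proof (rule equal_law_cong)
    fix t \<omega> assume t: "t \<in> {0::real..}" and \<omega>: "\<omega> \<in> space M"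
    show "\<alpha> powr H * Yproc H Z \<alpha> (t / \<alpha>) \<omega> = Yproc H Z' 1 t \<omega>"
      unfolding Yproc_Yf Z'_def using Yf_scale[OF H a fbm_cont[OF f \<omega>], of t] t by simp
  qed simp
  ultimately show "equal_law M {0..} (\<lambda>t \<omega>. \<alpha> powr H * Yproc H Z \<alpha> (t / \<alpha>) \<omega>) (Yproc H Z 1)" by simp
  show "stationary_increments M (Yproc H Z \<alpha>)"
    unfolding stationary_increments_def
  proof (intro allI impI)
    fix h :: real assume h: "0 \<le> h"
    define Z'' where "Z'' = (\<lambda>x \<omega>. (exp (\<alpha>*h/H)) powr (-H) * Z (exp (\<alpha>*h/H) * x) \<omega>)"
    have f'': "is_fbm M H Z''" unfolding Z''_def by (rule fbm_scale[OF f]) simp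
    have "equal_law M {0..} (Yproc H Z'' \<alpha>) (Yproc H Z \<alpha>)" by (rule Y_equal_law[OF f'' f H a])
    moreover have "equal_law M {0..} (\<lambda>t \<omega>. Yproc H Z \<alpha> (t + h) \<omega> - Yproc H Z \<alpha> h \<omega>) (\<lambda>t \<omega>. Yproc H Z \<alpha> t \<omega> - Yproc H Z \<alpha> 0 \<omega>)
        = equal_law M {0..} (Yproc H Z'' \<alpha>) (Yproc H Z \<alpha>)"
    proof (rule equal_law_cong)
      fix t \<omega> assume t: "t \<in> {0::real..}" and \<omega>: "\<omega> \<in> space M"
      show "Yproc H Z \<alpha> (t + h) \<omega> - Yproc H Z \<alpha> h \<omega> = Yproc H Z'' \<alpha> t \<omega>"
        unfolding Yproc_Yf Z''_def using Yf_shift[OF H a fbm_cont[OF f \<omega>] _ h, of t] t by simp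
      show "Yproc H Z \<alpha> t \<omega> - Yproc H Z \<alpha> 0 \<omega> = Yproc H Z \<alpha> t \<omega>"
        unfolding Yproc_Yf by (simp add: Yf_zero)
    qed
    ultimately show "equal_law M {0..} (\<lambda>t \<omega>. Yproc H Z \<alpha> (t + h) \<omega> - Yproc H Z \<alpha> h \<omega>) (\<lambda>t \<omega>. Yproc H Z \<alpha> t \<omega> - Yproc H Z \<alpha> 0 \<omega>)"
      by simp
  qed
qed

end
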